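(* Let $X$ be an $M$-thin combinatorial $2$-complex and $\lambda>0$. Let $\mathcal H\le\mathrm{Aut}(X)$, let $Y\subset X$ be an $\mathcal H$-cocompact subcomplex, let $R$ be a $2$-cell of $X$ that is a missing $3$-shell of $Y$ with inner path $S$ and outer path $Q$, and let $Y'=Y\cup\bigcup_{h\in\mathcal H}hR$ be the $(\mathcal H,R)$-enlargement of $Y$. If $|S|<3\lambda|\partial R|$ and $3\lambda M<\frac{1}{|\mathrm{Aut}_{\mathcal H}(R)|}$, then $\mathrm{per}(Y',\mathcal H)<\mathrm{per}(Y,\mathcal H)$.
   Context: $\mathrm{Aut}(X)$ is the group of cellular automorphisms. A side at a $1$-cell $x$ is a pair $(R,r)$ with $R$ a $2$-cell and $r$ a $1$-cell of the boundary cycle $\partial R$ mapping to $x$; $X$ is $M$-thin if each $1$-cell has at most $M$ sides. For a subcomplex $Z$, a side at $x$ lifts to $Z$ if $x\subset Z$ and $(R,r)\to(X,x)$ factors through $Z$; $\mathrm{Missing}_X(Z,x)$ is the set of sides at $x$ not lifting to $Z$. $Z$ is $\mathcal H$-cocompact if $\mathcal H$-invariant with finitely many $\mathcal H$-orbits of cells, and then $\mathrm{per}(Z,\mathcal H)=\sum_i|\mathrm{Missing}_X(Z,z_i)|$ with $z_i$ representatives of the $\mathcal H$-orbits of $1$-cells of $Z$. A piece is a nontrivial path factoring through boundary cycles of two $2$-cells in essentially distinct ways (no compatible homeomorphism of the boundary cycles). A missing $3$-shell of $Y$ is a $2$-cell $R$ of $X$ not contained in $Y$ with $\partial R=QS$,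 where the outer path $Q$ lies in $Y$ and the inner path $S$ is a concatenation of at most $3$ pieces. $\mathrm{Aut}_{\mathcal H}(R)=\mathrm{Stab}_{\mathcal H}(R)/\mathrm{Fix}_{\mathcal H}(R)$, with $\mathrm{Fix}_{\mathcal H}(R)$ the pointwise stabilizer. *)

theory Defs
  imports Complex_Main
begin

text \<open>A combinatorial 2-complex: 0-cells, 1-cells (with endpoints), and 2-cells, each
2-cell being attached along a closed combinatorial path (its boundary cycle), given as a
nonempty cyclic list of oriented 1-cells.  An oriented 1-cell is a pair (e, b): b = True
means e is traversed from src e to tgt e.  Position i of the list is the i-th 1-cell of the
boundary cycle (a circle subdivided into n 1-cells; the i-th goes from vertex i to i+1 mod n).\<close>

record ('v,'e,'f) complex2 =
  verts :: "'v set"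
  edges :: "'e set"
  faces :: "'f set"
  src :: "'e \<Rightarrow> 'v"
  tgt :: "'e \<Rightarrow> 'v"
  bd :: "'f \<Rightarrow> ('e \<times> bool) list"

definition oe_start :: "('v,'e,'f) complex2 \<Rightarrow> 'e \<times> bool \<Rightarrow> 'v" where
  "oe_start X oe = (if snd oe then src X (fst oe) else tgt X (fst oe))"

definition oe_end :: "('v,'e,'f) complex2 \<Rightarrow> 'e \<times> bool \<Rightarrow> 'v" where
  "oe_end X oe = (if snd oe then tgt X (fst oe) else src X (fst oe))"

definition oe_flip :: "bool \<Rightarrow> 'e \<times> bool \<Rightarrow> 'e \<times> bool" where
  "oe_flip r oe = (fst oe, snd oe \<noteq> r)"

definition complex2 :: "('v,'e,'f) complex2 \<Rightarrow> bool" where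
  "complex2 X \<longleftrightarrow>
     (\<forall>e\<in>edges X. src X e \<in> verts X \<and> tgt X e \<in> verts X) \<and>
     (\<forall>f\<in>faces X. bd X f \<noteq> [] \<and> (\<forall>oe\<in>set (bd X f). fst oe \<in> edges X) \<and>
        (\<forall>i<length (bd X f).
           oe_end X (bd X f ! i) = oe_start X (bd X f ! (Suc i mod length (bd X f)))))"

definition sides :: "('v,'e,'f) complex2 \<Rightarrow> 'e \<Rightarrow> ('f \<times> nat) set" where
  "sides X x = {(R, i). R \<in> faces X \<and> i < length (bd X R) \<and> fst (bd X R ! i) = x}"

definition thin :: "('v,'e,'f) complex2 \<Rightarrow> nat \<Rightarrow> bool" where
  "thin X M \<longleftrightarrow> (\<forall>x\<in>edges X. finite (sides X x) \<and> card (sides X x) \<le> M)"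

text \<open>Combinatorial automorphisms of a cycle of length n (acting on the indices of its 1-cells):
rotation i \<mapsto> i + k, or reflection i \<mapsto> k - 1 - i (which reverses orientation).\<close>

definition dmap :: "nat \<Rightarrow> nat \<Rightarrow> bool \<Rightarrow> nat \<Rightarrow> nat" where
  "dmap n k r i = (if r then (k + (n - 1 - i)) mod n else (i + k) mod n)"

text \<open>A cellular automorphism: maps on 0-, 1- and 2-cells; cflip e records whether the 1-cell e
is mapped with reversed orientation; for a 2-cell f, (cfmap f, cfrev f) is the induced
combinatorial homeomorphism of the boundary cycle of f onto that of its image.  Values
outside the cells of X are normalised to the identity, so that automorphisms of X are
determined by their action on X.\<close>

record ('v,'e,'f) caut =
  cv :: "'v \<Rightarrow> 'v"
  ce :: "'e \<Rightarrow> 'e"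
  cflip :: "'e \<Rightarrow> bool"
  cf :: "'f \<Rightarrow> 'f"
  cfmap :: "'f \<Rightarrow> nat \<Rightarrow> nat"
  cfrev :: "'f \<Rightarrow> bool"

definition aut_oe :: "('v,'e,'f) caut \<Rightarrow> 'e \<times> bool \<Rightarrow> 'e \<times> bool" where
  "aut_oe h oe = (ce h (fst oe), snd oe \<noteq> cflip h (fst oe))"

definition is_aut :: "('v,'e,'f) complex2 \<Rightarrow> ('v,'e,'f) caut \<Rightarrow> bool" where
  "is_aut X h \<longleftrightarrow>
     bij_betw (cv h) (verts X) (verts X) \<and>
     bij_betw (ce h) (edges X) (edges X) \<and>
     bij_betw (cf h) (faces X) (faces X) \<and>
     (\<forall>v. v \<notin> verts X \<longrightarrow> cv h v = v) \<and>
     (\<forall>e. e \<notin> edges X \<longrightarrow> ce h e = e \<and> \<not> cflip h e) \<and>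
     (\<forall>f. f \<notin> faces X \<longrightarrow> cf h f = f \<and> cfmap h f = id \<and> \<not> cfrev h f) \<and>
     (\<forall>e\<in>edges X.
        (if cflip h e then src X (ce h e) = cv h (tgt X e) \<and> tgt X (ce h e) = cv h (src X e)
         else src X (ce h e) = cv h (src X e) \<and> tgt X (ce h e) = cv h (tgt X e))) \<and>
     (\<forall>f\<in>faces X. let n = length (bd X f) in
        length (bd X (cf h f)) = n \<and>
        (\<exists>k<n. \<forall>i<n. cfmap h f i = dmap n k (cfrev h f) i) \<and>
        (\<forall>i. n \<le> i \<longrightarrow> cfmap h f i = i) \<and>
        (\<forall>i<n. bd X (cf h f) ! (cfmap h f i) = oe_flip (cfrev h f) (aut_oe h (bd X f ! i))))"

definition aut_id :: "('v,'e,'f) caut" where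
  "aut_id = \<lparr>cv = id, ce = id, cflip = (\<lambda>_. False), cf = id, cfmap = (\<lambda>_. id),
             cfrev = (\<lambda>_. False)\<rparr>"

definition aut_comp :: "('v,'e,'f) caut \<Rightarrow> ('v,'e,'f) caut \<Rightarrow> ('v,'e,'f) caut" where
  "aut_comp h g = \<lparr>cv = cv h \<circ> cv g, ce = ce h \<circ> ce g,
                   cflip = (\<lambda>e. cflip g e \<noteq> cflip h (ce g e)),
                   cf = cf h \<circ> cf g,
                   cfmap = (\<lambda>f. cfmap h (cf g f) \<circ> cfmap g f),
                   cfrev = (\<lambda>f. cfrev g f \<noteq> cfrev h (cf g f))\<rparr>"

definition aut_subgroup :: "('v,'e,'f) complex2 \<Rightarrow> ('v,'e,'f) caut set \<Rightarrow> bool" where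
  "aut_subgroup X H \<longleftrightarrow>
     (\<forall>h\<in>H. is_aut X h) \<and> aut_id \<in> H \<and>
     (\<forall>g\<in>H. \<forall>h\<in>H. aut_comp g h \<in> H) \<and>
     (\<forall>h\<in>H. \<exists>g\<in>H. aut_comp g h = aut_id \<and> aut_comp h g = aut_id)"

record ('v,'e,'f) subcx =
  zv :: "'v set"
  ze :: "'e set"
  zf :: "'f set"

definition is_subcomplex :: "('v,'e,'f) complex2 \<Rightarrow> ('v,'e,'f) subcx \<Rightarrow> bool" where
  "is_subcomplex X Z \<longleftrightarrow>
     zv Z \<subseteq> verts X \<and> ze Z \<subseteq> edges X \<and> zf Z \<subseteq> faces X \<and>
     (\<forall>e\<in>ze Z. src X e \<in> zv Z \<and> tgt X e \<in> zv Z) \<and>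
     (\<forall>f\<in>zf Z. \<forall>oe\<in>set (bd X f). fst oe \<in> ze Z)"

text \<open>The side s = (R, r) at x lifts to the subcomplex Z: x lies in Z and the map of the
2-cell R into X factors through Z, i.e. R is a 2-cell of Z.\<close>
definition lifts_to :: "('v,'e,'f) subcx \<Rightarrow> 'e \<Rightarrow> 'f \<times> nat \<Rightarrow> bool" where
  "lifts_to Z x s \<longleftrightarrow> x \<in> ze Z \<and> fst s \<in> zf Z"

definition Missing :: "('v,'e,'f) complex2 \<Rightarrow> ('v,'e,'f) subcx \<Rightarrow> 'e \<Rightarrow> ('f \<times> nat) set" where
  "Missing X Z x = {s \<in> sides X x. \<not> lifts_to Z x s}"

definition vert_orbit :: "('v,'e,'f) caut set \<Rightarrow> 'v \<Rightarrow> 'v set" where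
  "vert_orbit H v = {cv h v | h. h \<in> H}"
definition edge_orbit :: "('v,'e,'f) caut set \<Rightarrow> 'e \<Rightarrow> 'e set" where
  "edge_orbit H x = {ce h x | h. h \<in> H}"
definition face_orbit :: "('v,'e,'f) caut set \<Rightarrow> 'f \<Rightarrow> 'f set" where
  "face_orbit H f = {cf h f | h. h \<in> H}"

definition H_invariant :: "('v,'e,'f) caut set \<Rightarrow> ('v,'e,'f) subcx \<Rightarrow> bool" where
  "H_invariant H Z \<longleftrightarrow> (\<forall>h\<in>H. cv h ` zv Z \<subseteq> zv Z \<and> ce h ` ze Z \<subseteq> ze Z \<and> cf h ` zf Z \<subseteq> zf Z)"

definition H_cocompact :: "('v,'e,'f) caut set \<Rightarrow> ('v,'e,'f) subcx \<Rightarrow> bool" where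
  "H_cocompact H Z \<longleftrightarrow> H_invariant H Z \<and>
     finite (vert_orbit H ` zv Z) \<and> finite (edge_orbit H ` ze Z) \<and> finite (face_orbit H ` zf Z)"

definition per :: "('v,'e,'f) complex2 \<Rightarrow> ('v,'e,'f) caut set \<Rightarrow> ('v,'e,'f) subcx \<Rightarrow> nat" where
  "per X H Z = (\<Sum>Ob\<in>edge_orbit H ` ze Z. card (Missing X Z (SOME z. z \<in> Ob)))"

definition cyc_start :: "nat \<Rightarrow> nat \<times> bool \<Rightarrow> nat" where
  "cyc_start n c = (if snd c then fst c else Suc (fst c) mod n)"
definition cyc_end :: "nat \<Rightarrow> nat \<times> bool \<Rightarrow> nat" where
  "cyc_end n c = (if snd c then Suc (fst c) mod n else fst c)"

definition is_cyc_path :: "nat \<Rightarrow> (nat \<times> bool) list \<Rightarrow> bool" where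
  "is_cyc_path n l \<longleftrightarrow> (\<forall>c\<in>set l. fst c < n) \<and>
     (\<forall>j. Suc j < length l \<longrightarrow> cyc_end n (l ! j) = cyc_start n (l ! Suc j))"

definition cyc_oe :: "('v,'e,'f) complex2 \<Rightarrow> 'f \<Rightarrow> nat \<times> bool \<Rightarrow> 'e \<times> bool" where
  "cyc_oe X R c = oe_flip (\<not> snd c) (bd X R ! fst c)"

definition is_lift :: "('v,'e,'f) complex2 \<Rightarrow> 'f \<Rightarrow> ('e \<times> bool) list \<Rightarrow> (nat \<times> bool) list \<Rightarrow> bool" where
  "is_lift X R P l \<longleftrightarrow> R \<in> faces X \<and> is_cyc_path (length (bd X R)) l \<and> map (cyc_oe X R) l = P"

text \<open>A combinatorial homeomorphism from the boundary cycle of R1 to that of R2 commuting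
with their maps to X.\<close>
definition compat_iso :: "('v,'e,'f) complex2 \<Rightarrow> 'f \<Rightarrow> 'f \<Rightarrow> nat \<Rightarrow> bool \<Rightarrow> bool" where
  "compat_iso X R1 R2 k r \<longleftrightarrow> length (bd X R1) = length (bd X R2) \<and> k < length (bd X R1) \<and>
     (\<forall>i<length (bd X R1). bd X R2 ! dmap (length (bd X R1)) k r i = oe_flip r (bd X R1 ! i))"

definition dih_oe :: "nat \<Rightarrow> nat \<Rightarrow> bool \<Rightarrow> nat \<times> bool \<Rightarrow> nat \<times> bool" where
  "dih_oe n k r c = (dmap n k r (fst c), snd c \<noteq> r)"

definition is_piece :: "('v,'e,'f) complex2 \<Rightarrow> ('e \<times> bool) list \<Rightarrow> bool" where
  "is_piece X P \<longleftrightarrow> P \<noteq> [] \<and>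
     (\<exists>R1 R2 l1 l2. is_lift X R1 P l1 \<and> is_lift X R2 P l2 \<and>
        \<not> (\<exists>k r. compat_iso X R1 R2 k r \<and> map (dih_oe (length (bd X R1)) k r) l1 = l2))"

definition bd_readings :: "('v,'e,'f) complex2 \<Rightarrow> 'f \<Rightarrow> ('e \<times> bool) list set" where
  "bd_readings X R = {rotate k (bd X R) | k. True} \<union>
                     {rev (map (oe_flip True) (rotate k (bd X R))) | k. True}"

definition missing_3shell :: "('v,'e,'f) complex2 \<Rightarrow> ('v,'e,'f) subcx \<Rightarrow> 'f \<Rightarrow>
    ('e \<times> bool) list \<Rightarrow> ('e \<times> bool) list \<Rightarrow> bool" where
  "missing_3shell X Y R Q S \<longleftrightarrow>
     R \<in> faces X \<and> R \<notin> zf Y \<and> Q @ S \<in> bd_readings X R \<and>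
     set (map fst Q) \<subseteq> ze Y \<and> oe_start X (hd (Q @ S)) \<in> zv Y \<and>
     (\<exists>Ps. length Ps \<le> 3 \<and> S = concat Ps \<and> (\<forall>P\<in>set Ps. is_piece X P))"

definition stab_H :: "('v,'e,'f) caut set \<Rightarrow> 'f \<Rightarrow> ('v,'e,'f) caut set" where
  "stab_H H R = {h \<in> H. cf h R = R}"

definition fixes_cell :: "('v,'e,'f) complex2 \<Rightarrow> ('v,'e,'f) caut \<Rightarrow> 'f \<Rightarrow> bool" where
  "fixes_cell X h R \<longleftrightarrow> cf h R = R \<and> \<not> cfrev h R \<and>
     (\<forall>i<length (bd X R). cfmap h R i = i) \<and>
     (\<forall>oe\<in>set (bd X R). ce h (fst oe) = fst oe \<and> \<not> cflip h (fst oe) \<and>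
        cv h (oe_start X oe) = oe_start X oe)"

definition fix_H :: "('v,'e,'f) complex2 \<Rightarrow> ('v,'e,'f) caut set \<Rightarrow> 'f \<Rightarrow> ('v,'e,'f) caut set" where
  "fix_H X H R = {h \<in> H. fixes_cell X h R}"

text \<open>Aut_H(R) = Stab_H(R) / Fix_H(R), as the set of left cosets.\<close>
definition aut_H :: "('v,'e,'f) complex2 \<Rightarrow> ('v,'e,'f) caut set \<Rightarrow> 'f \<Rightarrow> ('v,'e,'f) caut set set" where
  "aut_H X H R = {(\<lambda>f. aut_comp g f) ` fix_H X H R | g. g \<in> stab_H H R}"

definition enlargement :: "('v,'e,'f) complex2 \<Rightarrow> ('v,'e,'f) caut set \<Rightarrow> ('v,'e,'f) subcx \<Rightarrow> 'f \<Rightarrow> ('v,'e,'f) subcx" where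
  "enlargement X H Y R =
     \<lparr>zv = zv Y \<union> (\<Union>h\<in>H. oe_start X ` set (bd X (cf h R))),
      ze = ze Y \<union> (\<Union>h\<in>H. fst ` set (bd X (cf h R))),
      zf = zf Y \<union> (\<lambda>h. cf h R) ` H\<rparr>"

end

theory Submission imports Defs "HOL-Library.Multiset" begin

lemma comp_id_fields:
  fixes h g :: "('v,'e,'f) caut"
  assumes "aut_comp h g = aut_id"
  shows "ce h (ce g x) = x" "cf h (cf g f) = f" "cfmap h (cf g f) (cfmap g f i) = i"
proof -
  have "ce (aut_comp h g) x = ce (aut_id :: ('v,'e,'f) caut) x" using arg_cong[OF assms, of "\<lambda>a. ce a x"] by simp
  thus "ce h (ce g x) = x" by (simp add: aut_comp_def aut_id_def)
  have "cf (aut_comp h g) f = cf (aut_id :: ('v,'e,'f) caut) f" using arg_cong[OF assms, of "\<lambda>a. cf a f"] by simp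
  thus "cf h (cf g f) = f" by (simp add: aut_comp_def aut_id_def)
  have "cfmap (aut_comp h g) f i = cfmap (aut_id :: ('v,'e,'f) caut) f i" using arg_cong[OF assms, of "\<lambda>a. cfmap a f i"] by simp
  thus "cfmap h (cf g f) (cfmap g f i) = i" by (simp add: aut_comp_def aut_id_def)
qed

lemma aut_comp_simps[simp]:
  "ce (aut_comp h g) x = ce h (ce g x)" "cf (aut_comp h g) f = cf h (cf g f)"
  "cfmap (aut_comp h g) f i = cfmap h (cf g f) (cfmap g f i)"
  by (simp_all add: aut_comp_def)

lemma aut_face:
  assumes "is_aut X g" "f \<in> faces X" "j < length (bd X f)"
  shows "cf g f \<in> faces X" "length (bd X (cf g f)) = length (bd X f)"
    "cfmap g f j < length (bd X f)"
    "fst (bd X (cf g f) ! cfmap g f j) = ce g (fst (bd X f ! j))"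
proof -
  let ?n = "length (bd X f)"
  have A: "length (bd X (cf g f)) = ?n \<and>
        (\<exists>k<?n. \<forall>i<?n. cfmap g f i = dmap ?n k (cfrev g f) i) \<and>
        (\<forall>i<?n. bd X (cf g f) ! (cfmap g f i) = oe_flip (cfrev g f) (aut_oe g (bd X f ! i)))"
    using assms unfolding is_aut_def Let_def by blast
  show "cf g f \<in> faces X" using assms unfolding is_aut_def by (meson bij_betw_apply)
  show "length (bd X (cf g f)) = ?n" using A by blast
  from A obtain k where "\<forall>i<?n. cfmap g f i = dmap ?n k (cfrev g f) i" by blast
  moreover have "0 < ?n" using assms(3) by linarith
  ultimately show "cfmap g f j < ?n" using assms(3) by (simp add: dmap_def)
  show "fst (bd X (cf g f) ! cfmap g f j) = ce g (fst (bd X f ! j))"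
    using A assms(3) by (simp add: oe_flip_def aut_oe_def)
qed

lemma aut_edge:
  assumes "is_aut X g" "x \<in> edges X" shows "ce g x \<in> edges X"
  using assms unfolding is_aut_def by (meson bij_betw_apply)

lemma filter_rotate_len: "length (filter p (rotate k xs)) = length (filter p xs)"
proof -
  have "length (filter p (rotate k xs)) = length (filter p (drop (k mod length xs) xs @ take (k mod length xs) xs))"
    by (simp add: rotate_drop_take)
  also have "\<dots> = length (filter p xs)" by (metis append_take_drop_id filter_append length_append add.commute)
  finally show ?thesis .
qed


theorem lemma3p17:
  fixes X :: "('v,'e,'f) complex2" and M :: nat and lam :: real
    and H :: "('v,'e,'f) caut set" and Y :: "('v,'e,'f) subcx" and R :: 'f
    and Q S :: "('e \<times> bool) list"
  assumes "complex2 X" and "thin X M" and "lam > 0"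
    and "aut_subgroup X H"
    and "is_subcomplex X Y" and "H_cocompact H Y"
    and "missing_3shell X Y R Q S"
    and "real (length S) < 3 * lam * real (length (bd X R))"
    and "3 * lam * real M < 1 / real (card (aut_H X H R))"
  shows "per X H (enlargement X H Y R) < per X H Y"
proof -
  note cx = assms(1) and thin = assms(2) and sg = assms(4) and sub = assms(5) and coc = assms(6)
    and sh = assms(7)
  have isaut: "\<And>h. h \<in> H \<Longrightarrow> is_aut X h" using sg unfolding aut_subgroup_def by blast
  have idH: "aut_id \<in> H" using sg unfolding aut_subgroup_def by blast
  have compH: "\<And>g h. g \<in> H \<Longrightarrow> h \<in> H \<Longrightarrow> aut_comp g h \<in> H"
    using sg unfolding aut_subgroup_def by blast
  have invH: "\<And>h. h \<in> H \<Longrightarrow> \<exists>g\<in>H. aut_comp g h = aut_id \<and> aut_comp h g = aut_id"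
    using sg unfolding aut_subgroup_def by blast
  have inv: "H_invariant H Y" using coc unfolding H_cocompact_def by blast
  have invE: "\<And>h x. h \<in> H \<Longrightarrow> x \<in> ze Y \<Longrightarrow> ce h x \<in> ze Y"
    using inv unfolding H_invariant_def by blast
  have invF: "\<And>h f. h \<in> H \<Longrightarrow> f \<in> zf Y \<Longrightarrow> cf h f \<in> zf Y"
    using inv unfolding H_invariant_def by blast
  have finO: "finite (edge_orbit H ` ze Y)" using coc unfolding H_cocompact_def by blast
  have RX: "R \<in> faces X" and RY: "R \<notin> zf Y" using sh unfolding missing_3shell_def by blast+
  define n where "n = length (bd X R)"
  define e where "e = (\<lambda>i. fst (bd X R ! i))"
  define Y' where "Y' = enlargement X H Y R"
  define rep where "rep = (\<lambda>Ob::'e set. SOME z. z \<in> Ob)"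
  define A where "A = card (aut_H X H R)"
  have npos: "0 < n" using cx RX unfolding complex2_def n_def by auto
  have eX: "\<And>i. i < n \<Longrightarrow> e i \<in> edges X"
    using cx RX unfolding complex2_def n_def e_def by (meson nth_mem)
  have zeY': "ze Y' = ze Y \<union> (\<Union>h\<in>H. fst ` set (bd X (cf h R)))"
    and zfY': "zf Y' = zf Y \<union> (\<lambda>h. cf h R) ` H"
    unfolding Y'_def enlargement_def by simp_all
  have ZYX: "ze Y \<subseteq> edges X" using sub unfolding is_subcomplex_def by blast
  have finsides: "\<And>z. z \<in> edges X \<Longrightarrow> finite (sides X z) \<and> card (sides X z) \<le> M"
    using thin unfolding thin_def by blast
  have finMiss: "\<And>Z z. z \<in> edges X \<Longrightarrow> finite (Missing X Z z)"
    unfolding Missing_def using finsides by auto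
  have MissSub: "\<And>z. Missing X Y' z \<subseteq> Missing X Y z"
    unfolding Missing_def lifts_to_def using zeY' zfY' by auto
  have Mpos: "M \<ge> 1"
  proof -
    have "(R, 0) \<in> sides X (e 0)" using RX npos unfolding sides_def e_def n_def by simp
    then have "card (sides X (e 0)) \<ge> 1" using finsides[OF eX[OF npos]]
      by (metis One_nat_def Suc_leI card_gt_0_iff empty_iff)
    then show ?thesis using finsides[OF eX[OF npos]] by linarith
  qed
  have Apos: "A \<ge> 1"
  proof (rule ccontr)
    assume "\<not> A \<ge> 1" then have "A = 0" by simp
    then have "3 * lam * real M < 0" using assms(9) unfolding A_def by simp
    moreover have "3 * lam * real M \<ge> 0" using assms(3) by simp
    ultimately show False by linarith
  qed
  have finAH: "finite (aut_H X H R)"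
  proof (rule ccontr)
    assume "infinite (aut_H X H R)"
    then have "A = 0" unfolding A_def by simp
    then show False using Apos by simp
  qed
  have K: "\<And>g i. g \<in> H \<Longrightarrow> i < n \<Longrightarrow>
     ce g (e i) \<in> edges X \<and> (cf g R, cfmap g R i) \<in> sides X (ce g (e i)) \<and>
     lifts_to Y' (ce g (e i)) (cf g R, cfmap g R i) \<and> cf g R \<notin> zf Y"
  proof -
    fix g i assume g: "g \<in> H" and i: "i < n"
    note af = aut_face[OF isaut[OF g] RX i[unfolded n_def]]
    have s1: "ce g (e i) \<in> edges X" using aut_edge[OF isaut[OF g] eX[OF i]] .
    have s2: "(cf g R, cfmap g R i) \<in> sides X (ce g (e i))"
      using af unfolding sides_def e_def by simp
    have "ce g (e i) \<in> fst ` set (bd X (cf g R))"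
      using af unfolding e_def by (metis image_eqI nth_mem)
    then have "ce g (e i) \<in> ze Y'" using zeY' g by blast
    moreover have "cf g R \<in> zf Y'" using zfY' g by blast
    ultimately have s3: "lifts_to Y' (ce g (e i)) (cf g R, cfmap g R i)"
      unfolding lifts_to_def by simp
    obtain gi where gi: "gi \<in> H" "aut_comp gi g = aut_id" using invH[OF g] by blast
    have s4: "cf g R \<notin> zf Y"
    proof
      assume "cf g R \<in> zf Y"
      then have "cf gi (cf g R) \<in> zf Y" using invF gi by blast
      then show False using comp_id_fields(2)[OF gi(2)] RY by simp
    qed
    show "ce g (e i) \<in> edges X \<and> (cf g R, cfmap g R i) \<in> sides X (ce g (e i)) \<and>
     lifts_to Y' (ce g (e i)) (cf g R, cfmap g R i) \<and> cf g R \<notin> zf Y"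
      using s1 s2 s3 s4 by blast
  qed
  have orbmem: "\<And>x. x \<in> edge_orbit H x"
    unfolding edge_orbit_def using idH by (force simp: aut_id_def)
  have repmem: "\<And>x. rep (edge_orbit H x) \<in> edge_orbit H x"
    unfolding rep_def using orbmem by (meson someI)
  have repform: "\<And>x. \<exists>h\<in>H. rep (edge_orbit H x) = ce h x"
    using repmem unfolding edge_orbit_def by blast
  define P where "P = {i. i < n \<and> e i \<in> ze Y}"
  define P' where "P' = {i. i < n \<and> e i \<notin> ze Y}"
  have finP: "finite P" and finP': "finite P'" unfolding P_def P'_def by auto
  have PP': "card P + card P' = n"
  proof -
    have "P \<union> P' = {..<n}" "P \<inter> P' = {}" unfolding P_def P'_def by auto
    then show ?thesis using card_Un_disjoint[OF finP finP'] by simp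
  qed
  have P'S: "card P' \<le> length S"
  proof -
    define p where "p = (\<lambda>oe::'e \<times> bool. fst oe \<notin> ze Y)"
    have c1: "card P' = length (filter p (bd X R))"
      unfolding length_filter_conv_card P'_def p_def e_def n_def by simp
    have QY: "set (map fst Q) \<subseteq> ze Y" and rd: "Q @ S \<in> bd_readings X R"
      using sh unfolding missing_3shell_def by blast+
    have fQ: "filter p Q = []" using QY unfolding p_def by (auto simp: filter_empty_conv)
    have "length (filter p (Q @ S)) = length (filter p (bd X R))"
    proof -
      from rd obtain k where "Q @ S = rotate k (bd X R) \<or> Q @ S = rev (map (oe_flip True) (rotate k (bd X R)))"
        unfolding bd_readings_def by blast
      moreover have "p \<circ> oe_flip True = p" unfolding p_def oe_flip_def by auto
      moreover note fr = filter_rotate_len[of p k "bd X R"]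
      ultimately show ?thesis
      proof (elim disjE)
        assume eq: "Q @ S = rotate k (bd X R)"
        have "length (filter p (Q @ S)) = length (filter p (rotate k (bd X R)))" by (simp only: eq)
        then show ?thesis using fr by simp
      next
        assume eq: "Q @ S = rev (map (oe_flip True) (rotate k (bd X R)))"
          and pc: "p \<circ> oe_flip True = p"
        have "length (filter p (Q @ S)) = length (filter p (rev (map (oe_flip True) (rotate k (bd X R)))))"
          by (simp only: eq)
        also have "\<dots> = length (filter (p \<circ> oe_flip True) (rotate k (bd X R)))"
          by (simp only: rev_filter[symmetric] length_rev filter_map length_map)
        also have "\<dots> = length (filter p (bd X R))" using pc fr by simp
        finally show ?thesis .
      qed
    qed
    then have "length (filter p (bd X R)) = length (filter p S)" using fQ by simp
    also have "\<dots> \<le> length S" by simp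
    finally show ?thesis using c1 by simp
  qed
  define NO where "NO = edge_orbit H ` (e ` P')"
  have finNO: "finite NO" unfolding NO_def using finP' by simp
  have cardNO: "card NO \<le> card P'"
    unfolding NO_def by (metis card_image_le finP' finite_imageI image_comp le_trans order_refl)
  have Orbs'sub: "edge_orbit H ` ze Y' \<subseteq> edge_orbit H ` ze Y \<union> NO"
  proof
    fix Ob assume "Ob \<in> edge_orbit H ` ze Y'"
    then obtain x where x: "x \<in> ze Y'" "Ob = edge_orbit H x" by blast
    show "Ob \<in> edge_orbit H ` ze Y \<union> NO"
    proof (cases "x \<in> ze Y")
      case True then show ?thesis using x by blast
    next
      case False
      then obtain h where h: "h \<in> H" "x \<in> fst ` set (bd X (cf h R))" using x zeY' by blast
      then obtain j where j: "j < length (bd X (cf h R))" "x = fst (bd X (cf h R) ! j)"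
        by (metis imageE in_set_conv_nth)
      obtain g where g: "g \<in> H" "aut_comp g h = aut_id" "aut_comp h g = aut_id" using invH[OF h(1)] by blast
      note af0 = aut_face[OF isaut[OF h(1)] RX]
      have hRX: "cf h R \<in> faces X" using af0 npos n_def by blast
      have lenh: "length (bd X (cf h R)) = n" using af0 npos n_def by blast
      note af = aut_face[OF isaut[OF g(1)] hRX j(1)]
      define j2 where "j2 = cfmap g (cf h R) j"
      have j2: "j2 < n" using af lenh j2_def by simp
      have ej2: "e j2 = ce g x"
        using af(4) comp_id_fields(2)[OF g(2)] j(2) unfolding e_def j2_def by simp
      have xback: "ce h (ce g x) = x" using comp_id_fields(1)[OF g(3)] .
      have "e j2 \<notin> ze Y"
      proof
        assume "e j2 \<in> ze Y" then have "ce h (e j2) \<in> ze Y" using invE h by blast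
        then show False using xback ej2 False by simp
      qed
      then have "j2 \<in> P'" using j2 P'_def by simp
      moreover have "edge_orbit H x = edge_orbit H (e j2)"
      proof
        show "edge_orbit H x \<subseteq> edge_orbit H (e j2)"
        proof
          fix y assume "y \<in> edge_orbit H x"
          then obtain k where k: "k \<in> H" "y = ce k x" unfolding edge_orbit_def by blast
          then have "y = ce (aut_comp k h) (e j2)" using xback ej2 by simp
          then show "y \<in> edge_orbit H (e j2)" unfolding edge_orbit_def using compH[OF k(1) h(1)] by blast
        qed
        show "edge_orbit H (e j2) \<subseteq> edge_orbit H x"
        proof
          fix y assume "y \<in> edge_orbit H (e j2)"
          then obtain k where k: "k \<in> H" "y = ce k (e j2)" unfolding edge_orbit_def by blast
          then have "y = ce (aut_comp k g) x" using ej2 by simp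
          then show "y \<in> edge_orbit H x" unfolding edge_orbit_def using compH[OF k(1) g(1)] by blast
        qed
      qed
      ultimately show ?thesis using x unfolding NO_def by blast
    qed
  qed
  define f' where "f' = (\<lambda>Ob. card (Missing X Y' (rep Ob)))"
  define Orbs where "Orbs = edge_orbit H ` ze Y"
  have perY: "per X H Y = (\<Sum>Ob\<in>Orbs. card (Missing X Y (rep Ob)))"
    unfolding per_def Orbs_def rep_def by simp
  have perY'1: "per X H Y' \<le> sum f' Orbs + sum f' NO"
  proof -
    have "per X H Y' = sum f' (edge_orbit H ` ze Y')" unfolding per_def f'_def rep_def by simp
    also have "\<dots> \<le> sum f' (Orbs \<union> NO)"
      using Orbs'sub finO finNO unfolding Orbs_def by (intro sum_mono2) auto
    also have "\<dots> \<le> sum f' Orbs + sum f' NO"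
      using sum_Un_nat[of Orbs NO f'] finO finNO unfolding Orbs_def by simp
    finally show ?thesis .
  qed
  have NObound: "sum f' NO \<le> card P' * (M - 1)"
  proof -
    have "sum f' NO \<le> of_nat (card NO) * (M - 1)"
    proof (rule sum_bounded_above)
      fix Ob assume "Ob \<in> NO"
      then obtain i where i: "i \<in> P'" "Ob = edge_orbit H (e i)" unfolding NO_def by blast
      obtain g where g: "g \<in> H" "rep Ob = ce g (e i)" using repform i by blast
      have iN: "i < n" using i P'_def by simp
      note k = K[OF g(1) iN]
      let ?z = "ce g (e i)" and ?s = "(cf g R, cfmap g R i)"
      have "Missing X Y' ?z \<subseteq> sides X ?z - {?s}"
        using k unfolding Missing_def by auto
      then have "card (Missing X Y' ?z) \<le> card (sides X ?z - {?s})"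
        using finsides[of ?z] k by (meson card_mono finite_Diff)
      also have "\<dots> = card (sides X ?z) - 1" using k finsides[of ?z] by simp
      also have "\<dots> \<le> M - 1" using k finsides[of ?z] by (meson diff_le_mono)
      finally show "f' Ob \<le> M - 1" unfolding f'_def using g by simp
    qed
    also have "\<dots> \<le> card P' * (M - 1)" using cardNO by simp
    finally show ?thesis .
  qed
  define hh where "hh = (\<lambda>i. SOME h. h \<in> H \<and> rep (edge_orbit H (e i)) = ce h (e i))"
  have hh: "\<And>i. hh i \<in> H \<and> rep (edge_orbit H (e i)) = ce (hh i) (e i)"
    unfolding hh_def using repform by (metis (mono_tags, lifting) someI)
  define \<sigma> where "\<sigma> = (\<lambda>i. (cf (hh i) R, cfmap (hh i) R i))"
  define T where "T = (\<lambda>Ob. \<sigma> ` {i \<in> P. edge_orbit H (e i) = Ob})"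
  define \<phi> where "\<phi> = (\<lambda>i. (edge_orbit H (e i), \<sigma> i))"
  have finT: "\<And>Ob. finite (T Ob)" unfolding T_def using finP by simp
  have decr: "sum f' Orbs + card (Sigma Orbs T) \<le> per X H Y"
  proof -
    have each: "f' Ob + card (T Ob) \<le> card (Missing X Y (rep Ob))" if Ob: "Ob \<in> Orbs" for Ob
    proof -
      obtain y where y: "y \<in> ze Y" "Ob = edge_orbit H y" using Ob unfolding Orbs_def by blast
      obtain h where h: "h \<in> H" "rep Ob = ce h y" using repform y by blast
      have zX: "rep Ob \<in> edges X" using aut_edge[OF isaut[OF h(1)], of y] ZYX y(1) h(2) by auto
      have Tsub: "T Ob \<subseteq> Missing X Y (rep Ob) - Missing X Y' (rep Ob)"
      proof
        fix s assume "s \<in> T Ob"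
        then obtain i where i: "i \<in> P" "edge_orbit H (e i) = Ob" "s = \<sigma> i" unfolding T_def by blast
        have iN: "i < n" using i P_def by simp
        have r: "rep Ob = ce (hh i) (e i)" using hh[of i] i by simp
        note k = K[OF conjunct1[OF hh[of i]] iN]
        show "s \<in> Missing X Y (rep Ob) - Missing X Y' (rep Ob)"
          using k r i unfolding Missing_def lifts_to_def \<sigma>_def by auto
      qed
      have "f' Ob + card (T Ob) = card (Missing X Y' (rep Ob) \<union> T Ob)"
        unfolding f'_def using Tsub finT finMiss[OF zX] by (subst card_Un_disjoint) auto
      also have "\<dots> \<le> card (Missing X Y (rep Ob))"
        using Tsub MissSub finMiss[OF zX] by (intro card_mono) auto
      finally show ?thesis .
    qed
    have "sum f' Orbs + card (Sigma Orbs T) = (\<Sum>Ob\<in>Orbs. f' Ob + card (T Ob))"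
      using finO finT unfolding Orbs_def by (simp add: sum.distrib)
    also have "\<dots> \<le> (\<Sum>Ob\<in>Orbs. card (Missing X Y (rep Ob)))" using each by (rule sum_mono)
    finally show ?thesis using perY by simp
  qed
  have imgsub: "\<phi> ` P \<subseteq> Sigma Orbs T"
    unfolding \<phi>_def T_def Orbs_def P_def by auto
  have finST: "finite (Sigma Orbs T)"
    using finO finP unfolding Orbs_def T_def by auto
  have cimg: "card (\<phi> ` P) \<le> card (Sigma Orbs T)" using imgsub finST by (rule card_mono[rotated])
  have idfix: "aut_id \<in> fix_H X H R"
    unfolding fix_H_def fixes_cell_def using idH by (simp add: aut_id_def)
  define Orb where "Orb = (\<lambda>i. {cfmap g R i | g. g \<in> stab_H H R})"
  have OrbSub: "Orb i \<subseteq> (\<lambda>C. cfmap (SOME c. c \<in> C) R i) ` aut_H X H R" if iN: "i < n" for i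
  proof -
    show "Orb i \<subseteq> (\<lambda>C. cfmap (SOME c. c \<in> C) R i) ` aut_H X H R"
    proof
      fix v assume "v \<in> Orb i"
      then obtain g where g: "g \<in> stab_H H R" "v = cfmap g R i" unfolding Orb_def by blast
      define C where "C = (\<lambda>f. aut_comp g f) ` fix_H X H R"
      have CA: "C \<in> aut_H X H R" unfolding aut_H_def C_def using g by blast
      have "aut_comp g aut_id \<in> C" unfolding C_def using idfix by blast
      then have "(SOME c. c \<in> C) \<in> C" by (meson someI)
      then obtain f where f: "f \<in> fix_H X H R" "(SOME c. c \<in> C) = aut_comp g f" unfolding C_def by blast
      have "cfmap (SOME c. c \<in> C) R i = v"
        using f iN g unfolding fix_H_def fixes_cell_def n_def by simp
      then show "v \<in> (\<lambda>C. cfmap (SOME c. c \<in> C) R i) ` aut_H X H R" using CA by blast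
    qed
  qed
  have cardOrb: "card (Orb i) \<le> A" if iN: "i < n" for i
  proof -
    have "Orb i \<subseteq> (\<lambda>C. cfmap (SOME c. c \<in> C) R i) ` aut_H X H R" using OrbSub iN .
    then have "card (Orb i) \<le> card ((\<lambda>C. cfmap (SOME c. c \<in> C) R i) ` aut_H X H R)"
      using finAH by (intro card_mono) auto
    also have "\<dots> \<le> A" unfolding A_def using card_image_le finAH by blast
    finally show ?thesis .
  qed
  have fibsub: "{j \<in> P. \<phi> j = \<phi> i} \<subseteq> Orb i" if iP: "i \<in> P" for i
  proof
    fix j assume "j \<in> {j \<in> P. \<phi> j = \<phi> i}"
    then have j: "j \<in> P" "\<sigma> j = \<sigma> i" unfolding \<phi>_def by auto
    have e1: "cf (hh j) R = cf (hh i) R" and e2: "cfmap (hh j) R j = cfmap (hh i) R i"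
      using j(2) unfolding \<sigma>_def by auto
    obtain gi where gi: "gi \<in> H" "aut_comp gi (hh j) = aut_id" using invH hh by blast
    define g where "g = aut_comp gi (hh i)"
    have gH: "g \<in> H" unfolding g_def using compH gi hh by blast
    have "cf g R = R" unfolding g_def using comp_id_fields(2)[OF gi(2), of R] e1 by simp
    moreover have "cfmap g R i = j" unfolding g_def
      using comp_id_fields(3)[OF gi(2), of R j] e1 e2 by simp
    ultimately show "j \<in> Orb i" unfolding Orb_def stab_H_def using gH by blast
  qed
  have fiber: "card P \<le> A * card (\<phi> ` P)"
  proof -
    have "P = (\<Union>y\<in>\<phi> ` P. {j \<in> P. \<phi> j = y})" by auto
    then have "card P \<le> (\<Sum>y\<in>\<phi> ` P. card {j \<in> P. \<phi> j = y})"
      using card_UN_le[of "\<phi> ` P" "\<lambda>y. {j \<in> P. \<phi> j = y}"] finP by simp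
    also have "\<dots> \<le> of_nat (card (\<phi> ` P)) * A"
    proof (rule sum_bounded_above)
      fix y assume "y \<in> \<phi> ` P"
      then obtain i where i: "i \<in> P" "y = \<phi> i" by blast
      have "card {j \<in> P. \<phi> j = y} \<le> card (Orb i)"
      proof (rule card_mono)
        have "i < n" using i P_def by simp
        then show "finite (Orb i)" using OrbSub finAH finite_subset by blast
        show "{j \<in> P. \<phi> j = y} \<subseteq> Orb i" using fibsub i by simp
      qed
      also have "\<dots> \<le> A" using cardOrb i P_def by simp
      finally show "card {j \<in> P. \<phi> j = y} \<le> A" .
    qed
    finally show ?thesis by (simp add: mult.commute)
  qed
  have "real (A * M * length S) < real n"
  proof -
    have a: "real A \<ge> 1" using Apos by simp
    have mm: "real M \<ge> 1" using Mpos by simp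
    have l: "3 * lam * real M * real A < 1"
      using assms(9) a unfolding A_def by (simp add: field_simps)
    have "real A * real M * real (length S) < real A * real M * (3 * lam * real n)"
      using assms(8) a mm unfolding n_def by (intro mult_strict_left_mono) auto
    also have "\<dots> = (3 * lam * real M * real A) * real n" by simp
    also have "\<dots> < 1 * real n" using l npos by (intro mult_strict_right_mono) auto
    finally show ?thesis by simp
  qed
  then have AMS: "A * M * length S < n" by linarith
  obtain m where m: "M = Suc m" using Mpos by (metis Suc_pred' less_eq_Suc_le One_nat_def)
  have "A * m * card P' + card P' < card P + card P'"
  proof -
    have "A * m * card P' + card P' \<le> A * M * card P'" using Apos m
      by (simp add: algebra_simps)
    also have "\<dots> \<le> A * M * length S" using P'S by simp
    finally show ?thesis using AMS PP' by linarith
  qed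
  then have "A * (m * card P') < card P" by (simp add: mult.assoc)
  then have "A * (m * card P') < A * card (\<phi> ` P)" using fiber by linarith
  then have "m * card P' < card (\<phi> ` P)" by (meson mult_less_cancel1)
  then have "card P' * (M - 1) < card (Sigma Orbs T)" using cimg m by (simp add: mult.commute)
  then show ?thesis using perY'1 NObound decr unfolding Y'_def by linarith
qed

end
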